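(* Let $0\leq A<B$ be integers. There exist integers $L\geq 2$ and $a_j,b_j$ for $2\leq j\leq L$ such that \[ A=a_2\leq\cdots\leq a_L=b_L\leq\cdots\leq b_2=B, \] with $\varepsilon_i(a_j)=\varepsilon_i(b_j)=0$ for $2\leq i<j\leq L$, and $a_{j+1}-a_j\in\{0,F_{j-1}\}$ and $b_j-b_{j+1}\in\{0,F_j\}$ for $2\leq j<L$.
   Context: Let $F_0=0$, $F_1=1$, $F_k=F_{k-1}+F_{k-2}$ be the Fibonacci numbers. Every positive integer $n$ has a unique (Zeckendorf) representation $n=\sum_{i\geq 2}\varepsilon_i(n)F_i$ with $\varepsilon_i(n)\in\{0,1\}$ and $\varepsilon_i(n)=1\Rightarrow\varepsilon_{i+1}(n)=0$; for $n=0$ all $\varepsilon_i(0)=0$. *)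

theory Defs
  imports "HOL-Number_Theory.Fib"
begin

definition zeck_rep :: "nat \<Rightarrow> nat set \<Rightarrow> bool" where
  "zeck_rep n S \<longleftrightarrow> finite S \<and> (\<forall>i\<in>S. 2 \<le> i \<and> Suc i \<notin> S) \<and> (\<Sum>i\<in>S. fib i) = n"

definition zeck_set :: "nat \<Rightarrow> nat set" where
  "zeck_set n = (THE S. zeck_rep n S)"

definition zeck_digit :: "nat \<Rightarrow> nat \<Rightarrow> nat" where
  "zeck_digit i n = (if i \<in> zeck_set n then 1 else 0)"

end

theory Submission
  imports Defs
begin

definition zk :: "nat \<Rightarrow> nat set \<Rightarrow> bool" where
  "zk k S \<longleftrightarrow> finite S \<and> (\<forall>i\<in>S. 2 \<le> i \<and> k \<le> i \<and> Suc i \<notin> S)"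

lemma fib_rec1: "1 \<le> j \<Longrightarrow> fib (Suc j) = fib j + fib (j - 1)"
  by (cases j; simp)

lemma zk_mono: "zk k S \<Longrightarrow> k' \<le> k \<Longrightarrow> zk k' S"
  unfolding zk_def by auto

lemma zk_remove: "zk k S \<Longrightarrow> zk k (S - {m})"
  unfolding zk_def by auto

lemma sb:
  assumes "zk k S" "\<forall>i\<in>S. i < m" "2 \<le> k" "k \<le> m"
  shows "sum fib S + fib (k - 1) \<le> fib m"
  using assms
proof (induction m arbitrary: S rule: less_induct)
  case (less m)
  show ?case
  proof (cases "S = {}")
    case True
    then show ?thesis using less.prems fib_mono[of "k - 1" m] by simp
  next
    case False
    have fin: "finite S" using less.prems unfolding zk_def by auto
    define M where "M = Max S"
    have MS: "M \<in> S" using False fin M_def by simp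
    have Mlt: "M < m" using less.prems MS by auto
    have Mk: "k \<le> M" using less.prems MS unfolding zk_def by auto
    have rest: "\<forall>i\<in>S - {M}. i < M - 1"
    proof
      fix i assume i: "i \<in> S - {M}"
      have "i \<le> M" using i fin M_def by simp
      moreover have "i \<noteq> M" using i by simp
      moreover have "Suc i \<noteq> M" using i less.prems MS unfolding zk_def by auto
      ultimately show "i < M - 1" by linarith
    qed
    have sumS: "sum fib S = fib M + sum fib (S - {M})"
      using fin MS by (simp add: sum.remove)
    show ?thesis
    proof (cases "M = k")
      case True
      have "S - {M} = {}"
      proof (rule ccontr)
        assume "S - {M} \<noteq> {}"
        then obtain i where i: "i \<in> S - {M}" by blast
        then have "k \<le> i" using less.prems unfolding zk_def by auto
        from rest i True have "i < k - 1" by auto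
        with \<open>k \<le> i\<close> show False by simp
      qed
      then have "sum fib S = fib k" using sumS True by (metis add.right_neutral sum.empty)
      moreover have "fib k + fib (k - 1) = fib (Suc k)" using fib_rec1[of k] less.prems by simp
      moreover have "fib (Suc k) \<le> fib m" using fib_mono Mlt True by simp
      ultimately show ?thesis by simp
    next
      case False
      then have "k \<le> M - 1" using Mk by simp
      then have ih: "sum fib (S - {M}) + fib (k - 1) \<le> fib (M - 1)"
        using less.IH[of "M - 1" "S - {M}"] Mlt rest less.prems zk_remove by auto
      have "fib (Suc M) = fib M + fib (M - 1)" using fib_rec1[of M] Mk less.prems by simp
      moreover have "fib (Suc M) \<le> fib m" using fib_mono Mlt by simp
      ultimately show ?thesis using ih sumS by simp
    qed
  qed
qed

lemma sum_ge: "finite S \<Longrightarrow> i \<in> S \<Longrightarrow> fib i \<le> sum fib S"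
  by (simp add: member_le_sum)

lemma above_max:
  assumes "zk 2 T" "T \<noteq> {}" "m = Max T" "m' > m"
  shows "sum fib T < fib m'"
proof -
  have "finite T" using assms unfolding zk_def by auto
  then have "\<forall>i\<in>T. i < Suc m" using assms by (simp add: less_Suc_eq_le)
  then have "sum fib T + fib 1 \<le> fib (Suc m)"
    using sb[of 2 T "Suc m"] assms \<open>finite T\<close> Max_in[of T] unfolding zk_def by force
  moreover have "fib (Suc m) \<le> fib m'" using fib_mono assms by simp
  ultimately show ?thesis by simp
qed

lemma cmp:
  assumes "zk k S" "zk k T" "2 \<le> k" "sum fib S < sum fib T"
  shows "sum fib S + fib (k - 1) \<le> sum fib T"
  using assms
proof (induction "card T" arbitrary: S T rule: less_induct)
  case less
  have finT: "finite T" and finS: "finite S" using less.prems unfolding zk_def by auto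
  have "T \<noteq> {}" using less.prems by auto
  define m where "m = Max T"
  have mT: "m \<in> T" using finT \<open>T \<noteq> {}\<close> m_def by simp
  have mk: "k \<le> m" using mT less.prems unfolding zk_def by auto
  have zT2: "zk 2 T" "zk 2 S" using less.prems zk_mono by auto
  show ?case
  proof (cases "m \<in> S")
    case True
    have eS: "sum fib S = fib m + sum fib (S - {m})" using finS True by (simp add: sum.remove)
    have eT: "sum fib T = fib m + sum fib (T - {m})" using finT mT by (simp add: sum.remove)
    have "card (T - {m}) < card T" using finT mT by (metis card_Diff1_less)
    then have "sum fib (S - {m}) + fib (k - 1) \<le> sum fib (T - {m})"
      using less.hyps[of "T - {m}" "S - {m}"] less.prems zk_remove eS eT by auto
    then show ?thesis using eS eT by simp
  next
    case False
    have allS: "\<forall>i\<in>S. i < m"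
    proof
      fix i assume i: "i \<in> S"
      show "i < m"
      proof (rule ccontr)
        assume "\<not> i < m"
        then have "i > m" using False i by (cases "i = m") auto
        then have "sum fib T < fib i" using above_max[OF zT2(1) \<open>T \<noteq> {}\<close> m_def] by simp
        also have "\<dots> \<le> sum fib S" using sum_ge finS i by simp
        finally show False using less.prems by simp
      qed
    qed
    have "sum fib S + fib (k - 1) \<le> fib m" using sb[OF less.prems(1) allS less.prems(3) mk] .
    also have "\<dots> \<le> sum fib T" using sum_ge finT mT by simp
    finally show ?thesis .
  qed
qed

lemma uniq:
  assumes "zk 2 S" "zk 2 T" "sum fib S = sum fib T"
  shows "S = T"
  using assms
proof (induction "card T" arbitrary: S T rule: less_induct)
  case less
  have finT: "finite T" and finS: "finite S" using less.prems unfolding zk_def by auto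
  show ?case
  proof (cases "T = {}")
    case True
    show ?thesis
    proof (rule ccontr)
      assume "S \<noteq> T"
      then obtain i where "i \<in> S" using True by blast
      then have "fib i \<le> sum fib S" using sum_ge finS by simp
      moreover have "2 \<le> i" using \<open>i \<in> S\<close> less.prems unfolding zk_def by auto
      then have "fib i > 0" by (simp add: fib_neq_0_nat)
      ultimately show False using less.prems True by simp
    qed
  next
    case ne: False
    define m where "m = Max T"
    have mT: "m \<in> T" using finT ne m_def by simp
    show ?thesis
    proof (cases "m \<in> S")
      case True
      have eS: "sum fib S = fib m + sum fib (S - {m})" using finS True by (simp add: sum.remove)
      have eT: "sum fib T = fib m + sum fib (T - {m})" using finT mT by (simp add: sum.remove)
      have "card (T - {m}) < card T" using finT mT by (metis card_Diff1_less)
      then have "S - {m} = T - {m}"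
        using less.hyps[of "T - {m}" "S - {m}"] less.prems zk_remove eS eT by auto
      then show ?thesis using True mT by blast
    next
      case False
      have "sum fib S < sum fib T \<or> sum fib T < sum fib S"
      proof (cases "\<exists>i\<in>S. i > m")
        case True
        then obtain i where i: "i \<in> S" "i > m" by blast
        then have "sum fib T < fib i" using above_max[OF less.prems(2) ne m_def] by simp
        also have "\<dots> \<le> sum fib S" using sum_ge finS i by simp
        finally show ?thesis by simp
      next
        case c: False
        have "\<forall>i\<in>S. i < m" using c False by (metis linorder_neqE_nat)
        then have "sum fib S + fib 1 \<le> fib m" using sb[OF less.prems(1)] mT less.prems
          unfolding zk_def by force
        also have "\<dots> \<le> sum fib T" using sum_ge finT mT by simp
        finally show ?thesis by simp
      qed
      then show ?thesis using less.prems by simp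
    qed
  qed
qed

lemma zeck_set_eq: "zk 2 S \<Longrightarrow> zeck_set (sum fib S) = S"
  unfolding zeck_set_def
proof (rule the1_equality)
  assume "zk 2 S"
  then show "zeck_rep (sum fib S) S" unfolding zk_def zeck_rep_def by auto
  show "\<exists>!T. zeck_rep (sum fib S) T"
  proof (rule ex1I[of _ S])
    show "zeck_rep (sum fib S) S" using \<open>zk 2 S\<close> unfolding zk_def zeck_rep_def by auto
    fix T assume "zeck_rep (sum fib S) T"
    then have "zk 2 T" "sum fib T = sum fib S" unfolding zk_def zeck_rep_def by auto
    then show "T = S" using uniq \<open>zk 2 S\<close> by metis
  qed
qed

lemma carry:
  assumes "zk (Suc k) T" "2 \<le> k"
  shows "\<exists>U. zk k U \<and> sum fib U = fib k + sum fib T"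
  using assms
proof (induction "card T" arbitrary: T k rule: less_induct)
  case less
  have finT: "finite T" using less.prems unfolding zk_def by auto
  show ?case
  proof (cases "Suc k \<in> T")
    case False
    have kT: "k \<notin> T" using less.prems unfolding zk_def by auto
    have "zk k (insert k T)" using less.prems False finT unfolding zk_def by auto
    moreover have "sum fib (insert k T) = fib k + sum fib T" using finT kT by simp
    ultimately show ?thesis by blast
  next
    case True
    have z: "zk (Suc (Suc (Suc k))) (T - {Suc k})"
      unfolding zk_def
    proof (intro conjI ballI)
      show "finite (T - {Suc k})" using finT by simp
      fix i assume i: "i \<in> T - {Suc k}"
      have a: "Suc k \<le> i" "2 \<le> i" "Suc i \<notin> T" using i less.prems unfolding zk_def by auto
      have "Suc (Suc k) \<notin> T" using True less.prems unfolding zk_def by auto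
      then have "i \<noteq> Suc (Suc k)" using i by auto
      then show "Suc (Suc (Suc k)) \<le> i" using a i by auto
      show "2 \<le> i" by fact
      show "Suc i \<notin> T - {Suc k}" using a by simp
    qed
    have "card (T - {Suc k}) < card T" using finT True by (metis card_Diff1_less)
    then obtain U where U: "zk (Suc (Suc k)) U"
      "sum fib U = fib (Suc (Suc k)) + sum fib (T - {Suc k})"
      using less.hyps[of "T - {Suc k}" "Suc (Suc k)"] z less.prems
        \<open>card (T - {Suc k}) < card T\<close> by auto
    have "sum fib T = fib (Suc k) + sum fib (T - {Suc k})" using finT True by (simp add: sum.remove)
    then have "sum fib U = fib k + sum fib T" using U by simp
    moreover have "zk k U" using U zk_mono by simp
    ultimately show ?thesis by blast
  qed
qed

lemma fib_bracket: "1 \<le> n \<Longrightarrow> \<exists>m. 2 \<le> m \<and> fib m \<le> n \<and> n < fib (Suc m)"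
proof (induction n rule: dec_induct)
  case base
  show ?case by (rule exI[of _ 2]) (simp add: numeral_eq_Suc)
next
  case (step n)
  then obtain m where m: "2 \<le> m" "fib m \<le> n" "n < fib (Suc m)" by blast
  show ?case
  proof (cases "Suc n < fib (Suc m)")
    case True then show ?thesis using m by auto
  next
    case False
    then have "Suc n = fib (Suc m)" using m by simp
    moreover have "fib m > 0" using m by (simp add: fib_neq_0_nat)
    ultimately show ?thesis using m by (intro exI[of _ "Suc m"]) auto
  qed
qed

lemma exists_rep: "\<exists>S. zk 2 S \<and> sum fib S = n"
proof (induction n rule: less_induct)
  case (less n)
  show ?case
  proof (cases "n = 0")
    case True then show ?thesis by (intro exI[of _ "{}"]) (simp add: zk_def)
  next
    case False
    then obtain m where m: "2 \<le> m" "fib m \<le> n" "n < fib (Suc m)" using fib_bracket[of n] by auto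
    have "fib m > 0" using m by (simp add: fib_neq_0_nat)
    then obtain T where T: "zk 2 T" "sum fib T = n - fib m" using less.IH[of "n - fib m"] m by auto
    have fe: "fib (Suc m) = fib m + fib (m - 1)" using fib_rec1[of m] m by simp
    have small: "\<forall>i\<in>T. i < m - 1"
    proof
      fix i assume i: "i \<in> T"
      show "i < m - 1"
      proof (rule ccontr)
        assume "\<not> i < m - 1"
        then have "fib (m - 1) \<le> fib i" using fib_mono by simp
        also have "\<dots> \<le> sum fib T" using sum_ge[of T i] i T(1) unfolding zk_def by blast
        finally show False using T m fe by simp
      qed
    qed
    have "zk 2 (insert m T)" using T small m unfolding zk_def by auto
    moreover have "m \<notin> T" using small by auto
    then have "sum fib (insert m T) = n" using T m unfolding zk_def by simp
    ultimately show ?thesis by blast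
  qed
qed

definition Zk :: "nat \<Rightarrow> nat \<Rightarrow> bool" where
  "Zk k n \<longleftrightarrow> (\<exists>S. zk k S \<and> sum fib S = n)"

fun aseq :: "nat \<Rightarrow> nat \<Rightarrow> nat" where
  "aseq A 0 = A"
| "aseq A (Suc j) = (if 2 \<le> j \<and> j \<in> zeck_set (aseq A j) then aseq A j + fib (j - 1) else aseq A j)"

fun bseq :: "nat \<Rightarrow> nat \<Rightarrow> nat" where
  "bseq B 0 = B"
| "bseq B (Suc j) = (if 2 \<le> j \<and> j \<in> zeck_set (bseq B j) then bseq B j - fib j else bseq B j)"

lemma aseq2: "aseq A 2 = A" by (simp add: numeral_eq_Suc)
lemma bseq2: "bseq B 2 = B" by (simp add: numeral_eq_Suc)

lemma aseq_Z: "2 \<le> j \<Longrightarrow> Zk j (aseq A j)"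
proof (induction j rule: dec_induct)
  case base then show ?case using exists_rep aseq2 unfolding Zk_def by metis
next
  case (step j)
  then obtain S where S: "zk j S" "sum fib S = aseq A j" unfolding Zk_def by auto
  have zs: "zeck_set (aseq A j) = S" using S zeck_set_eq zk_mono step by metis
  have finS: "finite S" using S unfolding zk_def by auto
  show ?case
  proof (cases "j \<in> S")
    case False
    then have "zk (Suc j) S" using S unfolding zk_def by (metis Suc_leI le_neq_implies_less)
    then show ?thesis using S zs False step unfolding Zk_def by auto
  next
    case True
    have z2: "zk (Suc (Suc j)) (S - {j})" unfolding zk_def
    proof (intro conjI ballI)
      show "finite (S - {j})" using finS by simp
      fix i assume i: "i \<in> S - {j}"
      have a: "j \<le> i" "2 \<le> i" "Suc i \<notin> S" using i S unfolding zk_def by auto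
      have "Suc j \<notin> S" using True S unfolding zk_def by auto
      then have "i \<noteq> Suc j" using i by auto
      then show "Suc (Suc j) \<le> i" using a i by auto
      show "2 \<le> i" by fact
      show "Suc i \<notin> S - {j}" using a by simp
    qed
    have e: "sum fib S = fib j + sum fib (S - {j})" using finS True by (simp add: sum.remove)
    obtain U where U: "zk (Suc j) U" "sum fib U = fib (Suc j) + sum fib (S - {j})"
      using carry[OF z2] step by auto
    have "aseq A (Suc j) = aseq A j + fib (j - 1)" using zs True step by simp
    also have "\<dots> = sum fib U" using U e S fib_rec1[of j] step by simp
    finally show ?thesis using U unfolding Zk_def by auto
  qed
qed

lemma bseq_Z: "2 \<le> j \<Longrightarrow> Zk j (bseq B j)"
proof (induction j rule: dec_induct)
  case base then show ?case using exists_rep bseq2 unfolding Zk_def by metis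
next
  case (step j)
  then obtain S where S: "zk j S" "sum fib S = bseq B j" unfolding Zk_def by auto
  have zs: "zeck_set (bseq B j) = S" using S zeck_set_eq zk_mono step by metis
  have finS: "finite S" using S unfolding zk_def by auto
  show ?case
  proof (cases "j \<in> S")
    case False
    then have "zk (Suc j) S" using S unfolding zk_def by (metis Suc_leI le_neq_implies_less)
    then show ?thesis using S zs False step unfolding Zk_def by auto
  next
    case True
    have z2: "zk (Suc j) (S - {j})" using S unfolding zk_def
      by (metis DiffD1 DiffD2 DiffI Suc_leI le_neq_implies_less singletonI finite_Diff)
    have e: "sum fib S = fib j + sum fib (S - {j})" using finS True by (simp add: sum.remove)
    have "bseq B (Suc j) = bseq B j - fib j" using zs True step by simp
    also have "\<dots> = sum fib (S - {j})" using e S by simp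
    finally show ?thesis using z2 unfolding Zk_def by auto
  qed
qed



lemma gap: "Zk k x \<Longrightarrow> Zk k y \<Longrightarrow> x < y \<Longrightarrow> 2 \<le> k \<Longrightarrow> x + fib (k - 1) \<le> y"
  unfolding Zk_def using cmp by blast

lemma Zk_set: "Zk k n \<Longrightarrow> 2 \<le> k \<Longrightarrow> \<exists>S. zk k S \<and> sum fib S = n \<and> zeck_set n = S"
  unfolding Zk_def using zeck_set_eq zk_mono by (metis)

lemma Zk_digit: "Zk j n \<Longrightarrow> 2 \<le> i \<Longrightarrow> i < j \<Longrightarrow> zeck_digit i n = 0"
proof -
  assume a: "Zk j n" "2 \<le> i" "i < j"
  then obtain S where "zk j S" "zeck_set n = S" using Zk_set by fastforce
  then show ?thesis using a unfolding zeck_digit_def zk_def by auto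
qed

lemma step_le:
  assumes j: "2 \<le> j" and lt: "aseq A j < bseq B j"
  shows "aseq A (Suc j) \<le> bseq B (Suc j)"
proof -
  obtain S where S: "zk j S" "sum fib S = aseq A j" "zeck_set (aseq A j) = S"
    using Zk_set[OF aseq_Z[OF j] j] by auto
  obtain T where T: "zk j T" "sum fib T = bseq B j" "zeck_set (bseq B j) = T"
    using Zk_set[OF bseq_Z[OF j] j] by auto
  have finS: "finite S" and finT: "finite T" using S T unfolding zk_def by auto
  have g0: "aseq A j + fib (j - 1) \<le> bseq B j"
    using gap[OF aseq_Z[OF j] bseq_Z[OF j] lt j] .
  have rmS: "zk (Suc (Suc j)) (S - {j})" if "j \<in> S"
    unfolding zk_def
  proof (intro conjI ballI)
    show "finite (S - {j})" using finS by simp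
    fix i assume i: "i \<in> S - {j}"
    have a: "j \<le> i" "2 \<le> i" "Suc i \<notin> S" using i S unfolding zk_def by auto
    have "Suc j \<notin> S" using that S unfolding zk_def by auto
    then have "i \<noteq> Suc j" using i by auto
    then show "Suc (Suc j) \<le> i" using a i by auto
    show "2 \<le> i" by fact
    show "Suc i \<notin> S - {j}" using a by simp
  qed
  have rmT: "zk (Suc (Suc j)) (T - {j})" if "j \<in> T"
    unfolding zk_def
  proof (intro conjI ballI)
    show "finite (T - {j})" using finT by simp
    fix i assume i: "i \<in> T - {j}"
    have a: "j \<le> i" "2 \<le> i" "Suc i \<notin> T" using i T unfolding zk_def by auto
    have "Suc j \<notin> T" using that T unfolding zk_def by auto
    then have "i \<noteq> Suc j" using i by auto
    then show "Suc (Suc j) \<le> i" using a i by auto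
    show "2 \<le> i" by fact
    show "Suc i \<notin> T - {j}" using a by simp
  qed
  have nS: "zk (Suc j) S" if "j \<notin> S" using S that unfolding zk_def
    by (metis Suc_leI le_neq_implies_less)
  have nT: "zk (Suc j) T" if "j \<notin> T" using T that unfolding zk_def
    by (metis Suc_leI le_neq_implies_less)
  have eS: "sum fib S = fib j + sum fib (S - {j})" if "j \<in> S" using finS that by (simp add: sum.remove)
  have eT: "sum fib T = fib j + sum fib (T - {j})" if "j \<in> T" using finT that by (simp add: sum.remove)
  have fr: "fib (Suc j) = fib j + fib (j - 1)" using fib_rec1[of j] j by simp
  show ?thesis
  proof (cases "j \<in> S")
    case True note jS = True
    show ?thesis
    proof (cases "j \<in> T")
      case True
      have "sum fib (S - {j}) < sum fib (T - {j})" using eS eT jS True S T lt by simp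
      then have "sum fib (S - {j}) + fib (Suc (Suc j) - 1) \<le> sum fib (T - {j})"
        using cmp[OF rmS[OF jS] rmT[OF True]] by simp
      then show ?thesis using eS eT jS True S T j fr by simp
    next
      case False
      then show ?thesis using g0 jS S T j by simp
    qed
  next
    case False note jS = False
    show ?thesis
    proof (cases "j \<in> T")
      case True
      have "aseq A j \<le> sum fib (T - {j})"
      proof (rule ccontr)
        assume "\<not> ?thesis"
        then have "sum fib (T - {j}) < sum fib S" using S by simp
        then have "sum fib (T - {j}) + fib (Suc j - 1) \<le> sum fib S"
          using cmp[OF zk_mono[OF rmT[OF True]] nS[OF jS]] j by simp
        then show False using eT[OF True] T S lt by simp
      qed
      then show ?thesis using eT[OF True] T S jS True j by simp
    next
      case False
      then show ?thesis using jS S T lt by simp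
    qed
  qed
qed

lemma fib_big: "Suc n \<le> fib (n + 2)"
proof (induction n)
  case 0 then show ?case by simp
next
  case (Suc n)
  have "fib (Suc n + 2) = fib (n + 2) + fib (Suc n)"
    by (metis add_2_eq_Suc' fib.simps(3) add.commute plus_1_eq_Suc)
  moreover have "fib (Suc n) > 0" by (simp add: fib_neq_0_nat)
  ultimately show ?case using Suc by simp
qed

theorem lemma5:
  fixes A B :: nat
  assumes "A < B"
  shows "\<exists>L::nat. \<exists>a b :: nat \<Rightarrow> nat. L \<ge> 2 \<and>
    a 2 = A \<and> b 2 = B \<and> a L = b L \<and>
    (\<forall>j. 2 \<le> j \<and> j < L \<longrightarrow> a j \<le> a (Suc j) \<and> b (Suc j) \<le> b j) \<and>
    (\<forall>i j. 2 \<le> i \<and> i < j \<and> j \<le> L \<longrightarrow> zeck_digit i (a j) = 0 \<and> zeck_digit i (b j) = 0) \<and>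
    (\<forall>j. 2 \<le> j \<and> j < L \<longrightarrow>
        (a (Suc j) = a j \<or> a (Suc j) = a j + fib (j - 1)) \<and>
        (b j = b (Suc j) \<or> b j = b (Suc j) + fib j))"
proof -
  define a where "a = aseq A"
  define b where "b = bseq B"
  have meet: "\<exists>L\<ge>2. a L = b L"
  proof (rule ccontr)
    assume ne: "\<not> ?thesis"
    have lt: "a j < b j" if "2 \<le> j" for j
      using that
    proof (induction j rule: dec_induct)
      case base then show ?case using assms aseq2 bseq2 a_def b_def by simp
    next
      case (step j)
      then have "a (Suc j) \<le> b (Suc j)" using step_le a_def b_def by simp
      moreover have "a (Suc j) \<noteq> b (Suc j)" using ne step by auto
      ultimately show ?case by simp
    qed
    have bB: "b j \<le> B" if "2 \<le> j" for j
      using that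
    proof (induction j rule: dec_induct)
      case base then show ?case using bseq2 b_def by simp
    next
      case (step j) then show ?case using b_def by auto
    qed
    have "a (B + 3) + fib (B + 3 - 1) \<le> b (B + 3)"
      using gap[OF aseq_Z[of "B + 3" A] bseq_Z[of "B + 3" B]] lt[of "B + 3"] a_def b_def by simp
    moreover have "Suc B \<le> fib (B + 2)" by (rule fib_big)
    ultimately show False using bB[of "B + 3"] by simp
  qed
  then obtain L where L: "L \<ge> 2" "a L = b L" by blast
  have d1: "\<forall>i j. 2 \<le> i \<and> i < j \<and> j \<le> L \<longrightarrow> zeck_digit i (a j) = 0 \<and> zeck_digit i (b j) = 0"
    using Zk_digit aseq_Z bseq_Z a_def b_def by (meson le_trans less_imp_le)
  have c: "b j = b (Suc j) \<or> b j = b (Suc j) + fib j" if j2: "2 \<le> j" for j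
  proof (cases "j \<in> zeck_set (b j)")
    case True
    obtain T where T: "zk j T" "sum fib T = b j" "zeck_set (b j) = T"
      using Zk_set[OF bseq_Z[OF j2] j2] b_def by auto
    then have "fib j \<le> b j" using True sum_ge[of T j] unfolding zk_def by auto
    then show ?thesis using True j2 b_def by simp
  next
    case False then show ?thesis using b_def by simp
  qed
  have "a 2 = A" "b 2 = B" using aseq2 bseq2 a_def b_def by auto
  moreover have "\<forall>j. 2 \<le> j \<and> j < L \<longrightarrow> a j \<le> a (Suc j) \<and> b (Suc j) \<le> b j"
    using a_def b_def by simp
  moreover have "\<forall>j. 2 \<le> j \<and> j < L \<longrightarrow> (a (Suc j) = a j \<or> a (Suc j) = a j + fib (j - 1))"
    using a_def by simp
  ultimately show ?thesis using L d1 c by blast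
qed

end
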